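(* Given $0<\epsilon<1/2$, there exists $C_1=C_1(\epsilon)>0$ such that for every $n$, every $0\le\eta<1/2$ and every $\mathbf{p},\mathbf{p}'\in[\epsilon,1-\epsilon]^n$ with $|p_i-p_i'|\ge\epsilon$ for all $i$, if $\bm\beta^*=(\beta_0,\dots,\beta_n)$ is the risk-minimizing linear solution of $(\mathbf{X},Y)$ for $(\mathbf{X},Y,Z)\sim\mathcal{D}^\eta_{\mathbf{p},\mathbf{p}'}$ and $\hat Y=\beta_0+\sum_{i=1}^n\beta_iX_i$, then $$\mathbb{P}_{(\mathbf{X},Y,Z)\sim\mathcal{D}^\eta_{\mathbf{p},\mathbf{p}'}}\big[\hat YZ\le0\big]\le\exp(-C_1n).$$
   Context: For $\mathbf{q}\in[0,1]^n$, $\mathcal{B}_{\mathbf{q}}$ is the law of independent $X_i\in\{-1,1\}$ with $\mathbb{P}[X_i=1]=q_i$. The toy distribution $\mathcal{D}^{\eta}_{\mathbf{p},\mathbf{p}'}$: sample $Z$ uniformly from $\{-1,1\}$; if $Z=1$ sample $\mathbf{X}\sim\mathcal{B}_{\mathbf{p}}$, else $\mathbf{X}\sim\mathcal{B}_{\mathbf{p}'}$; set $Y=Z$ with probability $1-\eta$ and $Y=-Z$ with probability $\eta$. The risk-minimizing linear solution is $\bm\beta^*=\arg\min_{\bm\beta}\mathbb{E}(\beta_0+\sum_i\beta_iX_i-Y)^2$. *)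

theory Defs
  imports "HOL-Analysis.Analysis"
begin

definition sign_vectors :: "nat \<Rightarrow> (nat \<Rightarrow> real) set" where
  "sign_vectors n = PiE {1..n} (\<lambda>_. {-1, 1})"

definition bern_mass :: "(nat \<Rightarrow> real) \<Rightarrow> nat \<Rightarrow> (nat \<Rightarrow> real) \<Rightarrow> real" where
  "bern_mass q n x = (\<Prod>i\<in>{1..n}. if x i = 1 then q i else 1 - q i)"

definition toy_mass :: "real \<Rightarrow> (nat \<Rightarrow> real) \<Rightarrow> (nat \<Rightarrow> real) \<Rightarrow> nat
    \<Rightarrow> (nat \<Rightarrow> real) \<Rightarrow> real \<Rightarrow> real \<Rightarrow> real" where
  "toy_mass \<eta> p p' n x y z =
     (1/2) * (if z = 1 then bern_mass p n x else bern_mass p' n x)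
           * (if y = z then 1 - \<eta> else \<eta>)"

definition lin_pred :: "(nat \<Rightarrow> real) \<Rightarrow> nat \<Rightarrow> (nat \<Rightarrow> real) \<Rightarrow> real" where
  "lin_pred \<beta> n x = \<beta> 0 + (\<Sum>i=1..n. \<beta> i * x i)"

definition toy_risk :: "real \<Rightarrow> (nat \<Rightarrow> real) \<Rightarrow> (nat \<Rightarrow> real) \<Rightarrow> nat \<Rightarrow> (nat \<Rightarrow> real) \<Rightarrow> real" where
  "toy_risk \<eta> p p' n \<beta> =
     (\<Sum>z\<in>{-1,1::real}. \<Sum>y\<in>{-1,1::real}. \<Sum>x\<in>sign_vectors n.
        toy_mass \<eta> p p' n x y z * (lin_pred \<beta> n x - y)^2)"

definition is_risk_minimizer :: "real \<Rightarrow> (nat \<Rightarrow> real) \<Rightarrow> (nat \<Rightarrow> real) \<Rightarrow> nat \<Rightarrow> (nat \<Rightarrow> real) \<Rightarrow> bool" where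
  "is_risk_minimizer \<eta> p p' n \<beta> \<longleftrightarrow> (\<forall>\<gamma>. toy_risk \<eta> p p' n \<beta> \<le> toy_risk \<eta> p p' n \<gamma>)"

definition toy_error_prob :: "real \<Rightarrow> (nat \<Rightarrow> real) \<Rightarrow> (nat \<Rightarrow> real) \<Rightarrow> nat \<Rightarrow> (nat \<Rightarrow> real) \<Rightarrow> real" where
  "toy_error_prob \<eta> p p' n \<beta> =
     (\<Sum>z\<in>{-1,1::real}. \<Sum>y\<in>{-1,1::real}. \<Sum>x\<in>sign_vectors n.
        if lin_pred \<beta> n x * z \<le> 0 then toy_mass \<eta> p p' n x y z else 0)"

end

theory Submission
  imports Defs
begin

definition mass1 :: "(nat \<Rightarrow> real) \<Rightarrow> nat \<Rightarrow> real \<Rightarrow> real" where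
  "mass1 q i v = (if v = 1 then q i else 1 - q i)"

lemma bern_mass_alt: "bern_mass q n x = (\<Prod>i\<in>{1..n}. mass1 q i (x i))"
  by (simp add: bern_mass_def mass1_def)

lemma factor:
  fixes g :: "nat \<Rightarrow> real \<Rightarrow> real"
  shows "(\<Sum>x\<in>sign_vectors n. \<Prod>i\<in>{1..n}. g i (x i)) = (\<Prod>i\<in>{1..n}. g i 1 + g i (-1))"
proof -
  have "(\<Prod>i\<in>{1..n}. \<Sum>y\<in>{-1,1::real}. g i y) = (\<Sum>x\<in>sign_vectors n. \<Prod>i\<in>{1..n}. g i (x i))"
    unfolding sign_vectors_def by (rule prod_sum_PiE) auto
  moreover have "(\<Sum>y\<in>{-1,1::real}. g i y) = g i 1 + g i (-1)" for i by simp
  ultimately show ?thesis by simp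
qed

lemma bern_expect:
  "(\<Sum>x\<in>sign_vectors n. bern_mass q n x * (\<Prod>i\<in>{1..n}. h i (x i)))
     = (\<Prod>i\<in>{1..n}. q i * h i 1 + (1 - q i) * h i (-1))"
  unfolding bern_mass_alt prod.distrib[symmetric] by (subst factor) (simp add: mass1_def)

lemma sv_val: "x \<in> sign_vectors n \<Longrightarrow> j \<in> {1..n} \<Longrightarrow> x j = -1 \<or> x j = 1"
  by (auto simp: sign_vectors_def PiE_def Pi_def)

lemma E0: "(\<Sum>x\<in>sign_vectors n. bern_mass q n x) = 1"
  using bern_expect[of q n "\<lambda>i v. 1"] by simp

lemma E1: assumes "j \<in> {1..n}"
  shows "(\<Sum>x\<in>sign_vectors n. bern_mass q n x * x j) = 2 * q j - 1"
proof -
  have "(\<Prod>i\<in>{1..n}. (if i = j then x i else 1)) = x j" for x :: "nat \<Rightarrow> real"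
    using assms by (simp add: prod.delta)
  hence "(\<Sum>x\<in>sign_vectors n. bern_mass q n x * x j)
     = (\<Prod>i\<in>{1..n}. q i * (if i = j then 1 else 1) + (1 - q i) * (if i = j then -1 else 1))"
    using bern_expect[of q n "\<lambda>i v. if i = j then v else 1"] by simp
  also have "\<dots> = (\<Prod>i\<in>{1..n}. (if i = j then 2 * q j - 1 else 1))"
    by (rule prod.cong) auto
  also have "\<dots> = 2 * q j - 1" using assms by (simp add: prod.delta)
  finally show ?thesis .
qed

lemma E2: assumes "i \<in> {1..n}" "j \<in> {1..n}"
  shows "(\<Sum>x\<in>sign_vectors n. bern_mass q n x * (x i * x j))
     = (2 * q i - 1) * (2 * q j - 1) + (if i = j then 1 - (2 * q j - 1)^2 else 0)"
proof (cases "i = j")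
  case True
  have "(\<Sum>x\<in>sign_vectors n. bern_mass q n x * (x i * x j)) = (\<Sum>x\<in>sign_vectors n. bern_mass q n x)"
    by (rule sum.cong) (use True sv_val[OF _ assms(2)] in force)+
  then show ?thesis using True E0 by (simp add: power2_eq_square)
next
  case False
  have "(\<Prod>k\<in>{1..n}. (if k = i then x k else 1) * (if k = j then x k else 1)) = x i * x j" for x :: "nat \<Rightarrow> real"
    using assms by (simp add: prod.delta prod.distrib)
  hence "(\<Sum>x\<in>sign_vectors n. bern_mass q n x * (x i * x j))
     = (\<Prod>k\<in>{1..n}. q k * ((if k = i then 1 else 1) * (if k = j then 1 else 1))
           + (1 - q k) * ((if k = i then -1 else 1) * (if k = j then -1 else 1)))"
    using bern_expect[of q n "\<lambda>k v. (if k = i then v else 1) * (if k = j then v else 1)"] by simp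
  also have "\<dots> = (\<Prod>k\<in>{1..n}. (if k = i then 2 * q i - 1 else 1) * (if k = j then 2 * q j - 1 else 1))"
    by (rule prod.cong) (use False in auto)
  also have "\<dots> = (2 * q i - 1) * (2 * q j - 1)" using assms by (simp add: prod.delta prod.distrib)
  finally show ?thesis using False by simp
qed

lemma EL0: "(\<Sum>x\<in>sign_vectors n. bern_mass q n x * lin_pred b n x) = b 0 + (\<Sum>i=1..n. b i * (2 * q i - 1))"
proof -
  have "(\<Sum>x\<in>sign_vectors n. bern_mass q n x * lin_pred b n x)
     = (\<Sum>x\<in>sign_vectors n. b 0 * bern_mass q n x + (\<Sum>i=1..n. b i * (bern_mass q n x * x i)))"
    by (rule sum.cong) (auto simp: lin_pred_def algebra_simps sum_distrib_left)
  also have "\<dots> = b 0 * (\<Sum>x\<in>sign_vectors n. bern_mass q n x)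
      + (\<Sum>i=1..n. b i * (\<Sum>x\<in>sign_vectors n. bern_mass q n x * x i))"
    by (simp add: sum.distrib sum_distrib_left) (rule sum.swap)
  also have "\<dots> = b 0 + (\<Sum>i=1..n. b i * (2 * q i - 1))"
    by (simp add: E0 E1)
  finally show ?thesis .
qed

lemma EL1: assumes "j \<in> {1..n}"
  shows "(\<Sum>x\<in>sign_vectors n. bern_mass q n x * (lin_pred b n x * x j))
    = b 0 * (2 * q j - 1) + (\<Sum>i=1..n. b i * ((2 * q i - 1) * (2 * q j - 1)))
      + b j * (1 - (2 * q j - 1)^2)"
proof -
  have "(\<Sum>x\<in>sign_vectors n. bern_mass q n x * (lin_pred b n x * x j))
     = (\<Sum>x\<in>sign_vectors n. b 0 * (bern_mass q n x * x j) + (\<Sum>i=1..n. b i * (bern_mass q n x * (x i * x j))))"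
    by (rule sum.cong) (auto simp: lin_pred_def algebra_simps sum_distrib_left sum_distrib_right)
  also have "\<dots> = b 0 * (\<Sum>x\<in>sign_vectors n. bern_mass q n x * x j)
      + (\<Sum>i=1..n. b i * (\<Sum>x\<in>sign_vectors n. bern_mass q n x * (x i * x j)))"
    by (simp add: sum.distrib sum_distrib_left) (rule sum.swap)
  also have "(\<Sum>i=1..n. b i * (\<Sum>x\<in>sign_vectors n. bern_mass q n x * (x i * x j)))
     = (\<Sum>i=1..n. b i * ((2 * q i - 1) * (2 * q j - 1)) + (if i = j then b j * (1 - (2 * q j - 1)^2) else 0))"
  proof (rule sum.cong)
    fix i assume "i \<in> {1..n}"
    thus "b i * (\<Sum>x\<in>sign_vectors n. bern_mass q n x * (x i * x j))
      = b i * ((2 * q i - 1) * (2 * q j - 1)) + (if i = j then b j * (1 - (2 * q j - 1)^2) else 0)"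
      unfolding E2[OF \<open>i \<in> {1..n}\<close> assms] by (simp add: distrib_left)
  qed simp
  also have "\<dots> = (\<Sum>i=1..n. b i * ((2 * q i - 1) * (2 * q j - 1))) + b j * (1 - (2 * q j - 1)^2)"
    using assms by (simp add: sum.distrib)
  finally show ?thesis using assms by (simp add: E1)
qed

definition dd :: "(nat \<Rightarrow> real) \<Rightarrow> (nat \<Rightarrow> real) \<Rightarrow> nat \<Rightarrow> real" where
  "dd p p' i = (2 - (2 * p i - 1)^2 - (2 * p' i - 1)^2) / 2"
definition ww :: "(nat \<Rightarrow> real) \<Rightarrow> (nat \<Rightarrow> real) \<Rightarrow> nat \<Rightarrow> real" where
  "ww p p' i = (p i - p' i) / dd p p' i"
definition mm :: "(nat \<Rightarrow> real) \<Rightarrow> (nat \<Rightarrow> real) \<Rightarrow> nat \<Rightarrow> real" where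
  "mm p p' i = p i + p' i - 1"
definition KK :: "(nat \<Rightarrow> real) \<Rightarrow> (nat \<Rightarrow> real) \<Rightarrow> nat \<Rightarrow> real" where
  "KK p p' n = (\<Sum>i=1..n. (p i - p' i) * ww p p' i)"
definition cc :: "real \<Rightarrow> (nat \<Rightarrow> real) \<Rightarrow> (nat \<Rightarrow> real) \<Rightarrow> nat \<Rightarrow> real" where
  "cc \<eta> p p' n = (1 - 2 * \<eta>) / (1 + KK p p' n)"
definition bt :: "real \<Rightarrow> (nat \<Rightarrow> real) \<Rightarrow> (nat \<Rightarrow> real) \<Rightarrow> nat \<Rightarrow> nat \<Rightarrow> real" where
  "bt \<eta> p p' n j = (if j = 0 then - cc \<eta> p p' n * (\<Sum>i=1..n. ww p p' i * mm p p' i) else cc \<eta> p p' n * ww p p' j)"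

lemma sum_bt: "(\<Sum>i=1..n. bt \<eta> p p' n i * f i) = cc \<eta> p p' n * (\<Sum>i=1..n. ww p p' i * f i)"
  by (simp add: sum_distrib_left bt_def mult.assoc)

lemma NE0:
  "(\<Sum>x\<in>sign_vectors n. bern_mass p n x * (lin_pred (bt \<eta> p p' n) n x - e)
      + bern_mass p' n x * (lin_pred (bt \<eta> p p' n) n x + e)) = 0"
proof -
  have "(\<Sum>x\<in>sign_vectors n. bern_mass p n x * (lin_pred (bt \<eta> p p' n) n x - e)
      + bern_mass p' n x * (lin_pred (bt \<eta> p p' n) n x + e))
    = (\<Sum>x\<in>sign_vectors n. bern_mass p n x * lin_pred (bt \<eta> p p' n) n x)
      - e * (\<Sum>x\<in>sign_vectors n. bern_mass p n x)
      + (\<Sum>x\<in>sign_vectors n. bern_mass p' n x * lin_pred (bt \<eta> p p' n) n x)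
      + e * (\<Sum>x\<in>sign_vectors n. bern_mass p' n x)"
    by (simp add: sum.distrib sum_subtractf sum_distrib_left algebra_simps)
  also have "\<dots> = 2 * bt \<eta> p p' n 0 + cc \<eta> p p' n * ((\<Sum>i=1..n. ww p p' i * (2 * p i - 1)) + (\<Sum>i=1..n. ww p p' i * (2 * p' i - 1)))"
    unfolding EL0 E0 sum_bt by (simp add: distrib_left)
  also have "(\<Sum>i=1..n. ww p p' i * (2 * p i - 1)) + (\<Sum>i=1..n. ww p p' i * (2 * p' i - 1))
     = 2 * (\<Sum>i=1..n. ww p p' i * mm p p' i)"
    by (simp add: sum.distrib[symmetric] sum_distrib_left mm_def algebra_simps)
  also have "2 * bt \<eta> p p' n 0 + cc \<eta> p p' n * (2 * (\<Sum>i=1..n. ww p p' i * mm p p' i)) = 0"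
    by (simp add: bt_def)
  finally show ?thesis .
qed

lemma NE1:
  assumes j: "j \<in> {1..n}" and dj: "dd p p' j \<noteq> 0" and K: "1 + KK p p' n \<noteq> 0"
  shows "(\<Sum>x\<in>sign_vectors n. (bern_mass p n x * (lin_pred (bt \<eta> p p' n) n x - (1 - 2 * \<eta>))
      + bern_mass p' n x * (lin_pred (bt \<eta> p p' n) n x + (1 - 2 * \<eta>))) * x j) = 0"
proof -
  define e where "e = 1 - 2 * \<eta>"
  define L where "L = lin_pred (bt \<eta> p p' n) n"
  define c where "c = cc \<eta> p p' n"
  define A where "A = (\<lambda>i. 2 * p i - 1)"
  define A' where "A' = (\<lambda>i. 2 * p' i - 1)"
  have "(\<Sum>x\<in>sign_vectors n. (bern_mass p n x * (L x - e) + bern_mass p' n x * (L x + e)) * x j)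
    = (\<Sum>x\<in>sign_vectors n. bern_mass p n x * (L x * x j))
      - e * (\<Sum>x\<in>sign_vectors n. bern_mass p n x * x j)
      + (\<Sum>x\<in>sign_vectors n. bern_mass p' n x * (L x * x j))
      + e * (\<Sum>x\<in>sign_vectors n. bern_mass p' n x * x j)"
    by (simp add: sum.distrib sum_subtractf sum_distrib_left algebra_simps)
  also have "\<dots> = bt \<eta> p p' n 0 * (A j + A' j) + c * ((\<Sum>i=1..n. ww p p' i * (A i * A j)) + (\<Sum>i=1..n. ww p p' i * (A' i * A' j)))
      + c * ww p p' j * (2 - (A j)^2 - (A' j)^2) - e * (A j - A' j)"
    unfolding L_def EL1[OF j] E1[OF j] sum_bt c_def A_def A'_def using j by (simp add: algebra_simps bt_def)
  also have "bt \<eta> p p' n 0 * (A j + A' j) + c * ((\<Sum>i=1..n. ww p p' i * (A i * A j)) + (\<Sum>i=1..n. ww p p' i * (A' i * A' j)))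
     = c * (\<Sum>i=1..n. ww p p' i * (2 * (p i - p' i) * (p j - p' j)))"
  proof -
    have "bt \<eta> p p' n 0 * (A j + A' j) = c * (\<Sum>i=1..n. - ww p p' i * mm p p' i * (A j + A' j))"
      by (simp add: bt_def c_def sum_distrib_left sum_distrib_right sum_negf mult.assoc)
    moreover have "(\<Sum>i=1..n. - ww p p' i * mm p p' i * (A j + A' j)) + ((\<Sum>i=1..n. ww p p' i * (A i * A j)) + (\<Sum>i=1..n. ww p p' i * (A' i * A' j)))
       = (\<Sum>i=1..n. ww p p' i * (2 * (p i - p' i) * (p j - p' j)))"
      by (simp add: sum.distrib[symmetric] A_def A'_def mm_def algebra_simps)
    ultimately show ?thesis by (simp add: distrib_left[symmetric])
  qed
  also have "c * (\<Sum>i=1..n. ww p p' i * (2 * (p i - p' i) * (p j - p' j))) = c * 2 * (p j - p' j) * KK p p' n"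
    by (simp add: KK_def sum_distrib_left sum_distrib_right algebra_simps)
  also have "c * ww p p' j * (2 - (A j)^2 - (A' j)^2) = c * 2 * (p j - p' j)"
    using dj by (simp add: ww_def A_def A'_def dd_def field_simps)
  also have "e * (A j - A' j) = c * (1 + KK p p' n) * 2 * (p j - p' j)"
  proof -
    have h: "c * (1 + KK p p' n) = e" using K by (simp add: c_def cc_def e_def)
    show ?thesis unfolding h by (simp add: A_def A'_def algebra_simps)
  qed
  finally show ?thesis unfolding e_def L_def by (simp add: algebra_simps)
qed

lemma NE:
  assumes d: "\<forall>j\<in>{1..n}. dd p p' j \<noteq> 0" and K: "1 + KK p p' n \<noteq> 0"
  shows "(\<Sum>x\<in>sign_vectors n. (bern_mass p n x * (lin_pred (bt \<eta> p p' n) n x - (1 - 2 * \<eta>))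
      + bern_mass p' n x * (lin_pred (bt \<eta> p p' n) n x + (1 - 2 * \<eta>))) * lin_pred g n x) = 0"
proof -
  define F where "F x = (bern_mass p n x * (lin_pred (bt \<eta> p p' n) n x - (1 - 2 * \<eta>))
      + bern_mass p' n x * (lin_pred (bt \<eta> p p' n) n x + (1 - 2 * \<eta>)))" for x
  have "(\<Sum>x\<in>sign_vectors n. F x * lin_pred g n x)
      = g 0 * (\<Sum>x\<in>sign_vectors n. F x) + (\<Sum>j=1..n. g j * (\<Sum>x\<in>sign_vectors n. F x * x j))"
    by (simp add: lin_pred_def sum.distrib sum_distrib_left sum_distrib_right algebra_simps)
       (rule sum.swap)
  also have "\<dots> = 0"
    using NE0[where e="1 - 2 * \<eta>" and \<eta>=\<eta> and p=p and p'=p' and n=n] NE1[OF _ _ K, of _ \<eta>] d unfolding F_def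
    by (simp add: algebra_simps)
  finally show ?thesis unfolding F_def .
qed

lemma swap3: "(\<Sum>z\<in>Z. \<Sum>y\<in>Y. \<Sum>x\<in>X. G x y z) = (\<Sum>x\<in>X. \<Sum>z\<in>Z. \<Sum>y\<in>Y. G x y z)"
  by (simp add: sum.swap[of _ Y X] sum.swap[of _ Z X])

lemma inner_cross: "(\<Sum>z\<in>{-1,1::real}. \<Sum>y\<in>{-1,1::real}. toy_mass \<eta> p p' n x y z * (D * (L - y)))
   = (1/2) * ((bern_mass p n x * (L - (1 - 2 * \<eta>)) + bern_mass p' n x * (L + (1 - 2 * \<eta>))) * D)"
  by (simp add: toy_mass_def field_simps)

lemma lin_diff: "lin_pred b n x - lin_pred b' n x = lin_pred (\<lambda>i. b i - b' i) n x"
  by (simp add: lin_pred_def sum_subtractf algebra_simps)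

lemma bern_pos: assumes "\<forall>i\<in>{1..n}. 0 < q i \<and> q i < 1" "x \<in> sign_vectors n"
  shows "bern_mass q n x > 0"
  unfolding bern_mass_def using assms by (intro prod_pos) auto

lemma bern_nonneg: assumes "\<forall>i\<in>{1..n}. 0 < q i \<and> q i < 1"
  shows "bern_mass q n x \<ge> 0"
  unfolding bern_mass_def using assms by (intro prod_nonneg) (auto simp: less_imp_le)

lemma minimizer_eq:
  assumes eta: "0 \<le> \<eta>" "\<eta> < 1"
    and pp: "\<forall>i\<in>{1..n}. 0 < p i \<and> p i < 1" "\<forall>i\<in>{1..n}. 0 < p' i \<and> p' i < 1"
    and d: "\<forall>j\<in>{1..n}. dd p p' j \<noteq> 0" and K: "1 + KK p p' n \<noteq> 0"
    and min: "is_risk_minimizer \<eta> p p' n \<beta>"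
    and x: "x \<in> sign_vectors n"
  shows "lin_pred \<beta> n x = lin_pred (bt \<eta> p p' n) n x"
proof -
  define L where "L = lin_pred (bt \<eta> p p' n) n"
  define D where "D = lin_pred (\<lambda>i. \<beta> i - bt \<eta> p p' n i) n"
  define M where "M = toy_mass \<eta> p p' n"
  have LD: "lin_pred \<beta> n x = L x + D x" for x
    using lin_diff[of \<beta> n x "bt \<eta> p p' n"] unfolding L_def D_def by simp
  have pw: "M x y z * (lin_pred \<beta> n x - y)^2 = M x y z * (L x - y)^2 + 2 * (M x y z * (D x * (L x - y))) + M x y z * (D x)^2" for x y z
    unfolding LD by (simp add: power2_eq_square algebra_simps)
  have cross: "(\<Sum>z\<in>{-1,1::real}. \<Sum>y\<in>{-1,1::real}. \<Sum>x\<in>sign_vectors n. M x y z * (D x * (L x - y))) = 0"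
    unfolding swap3 M_def inner_cross
    using NE[OF d K, of \<eta> "\<lambda>i. \<beta> i - bt \<eta> p p' n i"] unfolding L_def D_def
    by (simp add: sum_divide_distrib[symmetric])
  have risk: "toy_risk \<eta> p p' n \<beta> = toy_risk \<eta> p p' n (bt \<eta> p p' n)
     + (\<Sum>z\<in>{-1,1::real}. \<Sum>y\<in>{-1,1::real}. \<Sum>x\<in>sign_vectors n. M x y z * (D x)^2)"
    unfolding toy_risk_def M_def[symmetric] pw L_def[symmetric]
    using cross by (simp add: sum.distrib sum_distrib_left[symmetric])
  have Mnn: "M x y z \<ge> 0" if "z \<in> {-1,1}" for x y z
    using that eta bern_nonneg[OF pp(1), of x] bern_nonneg[OF pp(2), of x]
    by (auto simp: M_def toy_mass_def)
  have "toy_risk \<eta> p p' n \<beta> \<le> toy_risk \<eta> p p' n (bt \<eta> p p' n)"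
    using min unfolding is_risk_minimizer_def by blast
  hence le: "(\<Sum>z\<in>{-1,1::real}. \<Sum>y\<in>{-1,1::real}. \<Sum>x\<in>sign_vectors n. M x y z * (D x)^2) \<le> 0"
    using risk by simp
  have fin: "finite (sign_vectors n)" unfolding sign_vectors_def by (simp add: finite_PiE)
  have nn: "0 \<le> (\<Sum>x\<in>sign_vectors n. M x y z * (D x)^2)" if "z \<in> {-1,1}" for y z
    using Mnn[OF that] by (intro sum_nonneg) auto
  have z1: "(\<Sum>x\<in>sign_vectors n. M x 1 1 * (D x)^2) = 0"
    using le nn[of 1 1] nn[of "-1" 1] nn[of 1 "-1"] nn[of "-1" "-1"] by simp
  hence "M x 1 1 * (D x)^2 = 0"
    using Mnn fin x by (subst (asm) sum_nonneg_eq_0_iff) auto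
  moreover have "M x 1 1 > 0"
    using bern_pos[OF pp(1) x] eta by (simp add: M_def toy_mass_def)
  ultimately have "D x = 0" by simp
  thus ?thesis using LD L_def by simp
qed

lemma exp_quad: fixes u :: real assumes "\<bar>u\<bar> \<le> 1" shows "exp u \<le> 1 + u + u^2"
proof (cases "u \<ge> 0")
  case True thus ?thesis using assms exp_bound by auto
next
  case False
  define s where "s = - u"
  have s: "0 < s" "s \<le> 1" using False assms s_def by auto
  have pos: "0 < 1 - s + s^2" using s by (simp add: power2_eq_square) (smt (verit) mult_pos_pos s(1))
  have "1 \<le> (1 - s + s^2) * (1 + s)" using s by (simp add: power2_eq_square algebra_simps)
  also have "\<dots> \<le> (1 - s + s^2) * exp s"
    using pos exp_ge_add_one_self[of s] by (intro mult_left_mono) auto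
  finally have "1 \<le> (1 - s + s^2) * exp s" .
  hence "1 / exp s \<le> 1 - s + s^2" by (simp add: divide_simps)
  thus ?thesis by (simp add: s_def exp_minus field_simps)
qed

lemma coord_bound:
  fixes a b \<epsilon> :: real
  assumes e: "0 < \<epsilon>" "\<epsilon> < 1/2" and a: "\<epsilon> \<le> a" "a \<le> 1 - \<epsilon>" and b: "\<epsilon> \<le> b" "b \<le> 1 - \<epsilon>"
    and ab: "\<epsilon> \<le> \<bar>a - b\<bar>"
  defines "d \<equiv> (2 - (2 * a - 1)^2 - (2 * b - 1)^2) / 2"
  defines "w \<equiv> (a - b) / d"
  defines "m \<equiv> a + b - 1"
  defines "t \<equiv> \<epsilon>^4 / 2"
  shows "a * exp (- t * (w * (1 - m))) + (1 - a) * exp (- t * (w * (-1 - m))) \<le> exp (- (\<epsilon>^6 / 4))"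
proof -
  have "\<epsilon> * (1 - \<epsilon>) - \<epsilon> / 2 = \<epsilon> * (1/2 - \<epsilon>)" by (simp add: algebra_simps)
  moreover have "0 \<le> \<epsilon> * (1/2 - \<epsilon>)" using e by simp
  ultimately have ee: "\<epsilon> * (1 - \<epsilon>) \<ge> \<epsilon> / 2" by linarith
  have d_eq: "d = 2 * (a * (1 - a)) + 2 * (b * (1 - b))" unfolding d_def by (simp add: power2_eq_square field_simps)
  have "a * (1 - a) - \<epsilon> * (1 - \<epsilon>) = (a - \<epsilon>) * (1 - \<epsilon> - a)" by (simp add: algebra_simps)
  moreover have "0 \<le> (a - \<epsilon>) * (1 - \<epsilon> - a)" using a by (intro mult_nonneg_nonneg) auto
  ultimately have a1: "a * (1 - a) \<ge> \<epsilon> / 2" using ee by linarith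
  have "b * (1 - b) - \<epsilon> * (1 - \<epsilon>) = (b - \<epsilon>) * (1 - \<epsilon> - b)" by (simp add: algebra_simps)
  moreover have "0 \<le> (b - \<epsilon>) * (1 - \<epsilon> - b)" using b by (intro mult_nonneg_nonneg) auto
  ultimately have b1: "b * (1 - b) \<ge> \<epsilon> / 2" using ee by linarith
  have "1/4 - a * (1 - a) = (a - 1/2)^2" by (simp add: power2_eq_square algebra_simps)
  hence a2: "a * (1 - a) \<le> 1/4" using zero_le_power2[of "a - 1/2"] by linarith
  have "1/4 - b * (1 - b) = (b - 1/2)^2" by (simp add: power2_eq_square algebra_simps)
  hence b2: "b * (1 - b) \<le> 1/4" using zero_le_power2[of "b - 1/2"] by linarith
  have dlo: "d \<ge> 2 * \<epsilon>" using d_eq a1 b1 by simp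
  have dhi: "d \<le> 1" using d_eq a2 b2 by simp
  have dpos: "d > 0" using dlo e by simp
  have abs_ab: "\<bar>a - b\<bar> \<le> 1" unfolding abs_le_iff using a b e by linarith
  have wb: "\<bar>w\<bar> \<le> 1 / (2 * \<epsilon>)"
  proof -
    have "\<bar>w\<bar> = \<bar>a - b\<bar> / d" unfolding w_def abs_divide using dpos by simp
    also have "\<dots> \<le> 1 / d" using abs_ab dpos by (simp add: divide_right_mono)
    also have "\<dots> \<le> 1 / (2 * \<epsilon>)" using dlo e by (simp add: frac_le)
    finally show ?thesis .
  qed
  have mb: "\<bar>1 - m\<bar> \<le> 2" "\<bar>-1 - m\<bar> \<le> 2" unfolding abs_le_iff m_def using a b e by linarith+
  define f1 where "f1 = w * (1 - m)"
  define f2 where "f2 = w * (-1 - m)"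
  have f1b: "\<bar>f1\<bar> \<le> 1 / \<epsilon>"
  proof -
    have "\<bar>f1\<bar> = \<bar>w\<bar> * \<bar>1 - m\<bar>" by (simp add: f1_def abs_mult)
    also have "\<dots> \<le> (1 / (2 * \<epsilon>)) * 2" using wb mb e by (intro mult_mono) auto
    finally show ?thesis using e by simp
  qed
  have f2b: "\<bar>f2\<bar> \<le> 1 / \<epsilon>"
  proof -
    have "\<bar>f2\<bar> = \<bar>w\<bar> * \<bar>-1 - m\<bar>" by (simp add: f2_def abs_mult)
    also have "\<dots> \<le> (1 / (2 * \<epsilon>)) * 2" using wb mb e by (intro mult_mono) auto
    finally show ?thesis using e by simp
  qed
  have tpos: "t > 0" using e by (simp add: t_def)
  have tf: "\<bar>t * f\<bar> \<le> \<epsilon>^3 / 2" if "\<bar>f\<bar> \<le> 1 / \<epsilon>" for f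
  proof -
    have "\<bar>t * f\<bar> = t * \<bar>f\<bar>" using tpos by (simp add: abs_mult)
    also have "\<dots> \<le> t * (1 / \<epsilon>)" using that tpos by (intro mult_left_mono) auto
    also have "\<dots> = \<epsilon>^3 / 2" using e by (simp add: t_def power_eq_if field_simps)
    finally show ?thesis .
  qed
  have e3: "\<epsilon>^3 / 2 \<le> 1" using power_le_one[of \<epsilon> 3] e by simp
  have sq: "(t * f)^2 \<le> (\<epsilon>^3 / 2)^2" if "\<bar>f\<bar> \<le> 1 / \<epsilon>" for f
    using power_mono[OF tf[OF that] abs_ge_zero, of 2] by simp
  have ex1: "exp (- t * f1) \<le> 1 - t * f1 + (\<epsilon>^3 / 2)^2"
    using exp_quad[of "- t * f1"] tf[OF f1b] e3 sq[OF f1b] by (simp add: power2_eq_square)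
  have ex2: "exp (- t * f2) \<le> 1 - t * f2 + (\<epsilon>^3 / 2)^2"
    using exp_quad[of "- t * f2"] tf[OF f2b] e3 sq[OF f2b] by (simp add: power2_eq_square)
  have mean: "a * f1 + (1 - a) * f2 = (a - b)^2 / d"
    using dpos by (simp add: f1_def f2_def w_def m_def power2_eq_square field_simps)
  have "\<epsilon>^2 \<le> \<bar>a - b\<bar>^2" using power_mono[OF ab, of 2] e by simp
  hence ab2: "\<epsilon>^2 \<le> (a - b)^2" by simp
  have "(a - b)^2 * d \<le> (a - b)^2" using dhi by (intro mult_left_le) auto
  hence "(a - b)^2 \<le> (a - b)^2 / d" using dpos by (simp add: le_divide_eq)
  hence meanb: "a * f1 + (1 - a) * f2 \<ge> \<epsilon>^2" unfolding mean using ab2 by linarith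
  have a0: "0 \<le> a" "0 \<le> 1 - a" using a e by auto
  have "a * exp (- t * f1) + (1 - a) * exp (- t * f2)
      \<le> a * (1 - t * f1 + (\<epsilon>^3 / 2)^2) + (1 - a) * (1 - t * f2 + (\<epsilon>^3 / 2)^2)"
    using ex1 ex2 a0 by (intro add_mono mult_left_mono) simp_all
  also have "\<dots> = 1 - t * (a * f1 + (1 - a) * f2) + (\<epsilon>^3 / 2)^2" by (simp add: algebra_simps)
  also have "\<dots> \<le> 1 - t * \<epsilon>^2 + (\<epsilon>^3 / 2)^2" using meanb tpos by (simp add: mult_left_mono)
  also have "\<dots> = 1 - \<epsilon>^6 / 4" by (simp add: t_def power2_eq_square power_eq_if field_simps)
  also have "\<dots> \<le> exp (- (\<epsilon>^6 / 4))" using exp_ge_add_one_self[of "- (\<epsilon>^6 / 4)"] by simp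
  finally show ?thesis unfolding f1_def f2_def by simp
qed

definition SS :: "(nat \<Rightarrow> real) \<Rightarrow> (nat \<Rightarrow> real) \<Rightarrow> nat \<Rightarrow> (nat \<Rightarrow> real) \<Rightarrow> real" where
  "SS p p' n x = (\<Sum>i=1..n. ww p p' i * (x i - mm p p' i))"

lemma chernoff:
  assumes e: "0 < \<epsilon>" "\<epsilon> < 1/2"
    and hp: "\<forall>i\<in>{1..n}. \<epsilon> \<le> p i \<and> p i \<le> 1 - \<epsilon> \<and> \<epsilon> \<le> p' i \<and> p' i \<le> 1 - \<epsilon> \<and> \<epsilon> \<le> \<bar>p i - p' i\<bar>"
  shows "(\<Sum>x\<in>sign_vectors n. if SS p p' n x \<le> 0 then bern_mass p n x else 0) \<le> exp (- (\<epsilon>^6 / 4) * real n)"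
proof -
  define t where "t = \<epsilon>^4 / 2"
  have tpos: "t > 0" using e by (simp add: t_def)
  have pp: "\<forall>i\<in>{1..n}. 0 < p i \<and> p i < 1" using hp e by force
  define g where "g i v = mass1 p i v * exp (- t * (ww p p' i * (v - mm p p' i)))" for i v
  have "(\<Sum>x\<in>sign_vectors n. if SS p p' n x \<le> 0 then bern_mass p n x else 0)
      \<le> (\<Sum>x\<in>sign_vectors n. bern_mass p n x * exp (- t * SS p p' n x))"
  proof (rule sum_mono)
    fix x assume x: "x \<in> sign_vectors n"
    have b: "0 \<le> bern_mass p n x" using bern_nonneg[OF pp] .
    show "(if SS p p' n x \<le> 0 then bern_mass p n x else 0) \<le> bern_mass p n x * exp (- t * SS p p' n x)"
    proof (cases "SS p p' n x \<le> 0")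
      case True
      hence "1 \<le> exp (- t * SS p p' n x)" using tpos by (simp add: mult_le_0_iff)
      thus ?thesis using True b by (simp add: mult_le_cancel_left1 mult_le_cancel_left2)
    qed (use b in simp)
  qed
  also have "\<dots> = (\<Sum>x\<in>sign_vectors n. \<Prod>i\<in>{1..n}. g i (x i))"
  proof (rule sum.cong)
    fix x
    have "exp (- t * SS p p' n x) = (\<Prod>i\<in>{1..n}. exp (- t * (ww p p' i * (x i - mm p p' i))))"
    proof -
      have "- t * SS p p' n x = (\<Sum>i\<in>{1..n}. - t * (ww p p' i * (x i - mm p p' i)))"
        unfolding SS_def by (rule sum_distrib_left)
      thus ?thesis by (simp only: exp_sum finite_atLeastAtMost)
    qed
    thus "bern_mass p n x * exp (- t * SS p p' n x) = (\<Prod>i\<in>{1..n}. g i (x i))"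
      unfolding g_def bern_mass_alt prod.distrib by simp
  qed simp
  also have "\<dots> = (\<Prod>i\<in>{1..n}. g i 1 + g i (-1))" by (rule factor)
  also have "\<dots> \<le> (\<Prod>i\<in>{1..n}. exp (- (\<epsilon>^6 / 4)))"
  proof (rule prod_mono)
    fix i assume i: "i \<in> {1..n}"
    have "g i 1 + g i (-1) \<le> exp (- (\<epsilon>^6 / 4))"
      using coord_bound[OF e, of "p i" "p' i"] hp i
      unfolding g_def mass1_def ww_def dd_def mm_def t_def by simp
    moreover have "0 \<le> g i 1 + g i (-1)" using pp i unfolding g_def mass1_def
      by (intro add_nonneg_nonneg mult_nonneg_nonneg) (auto simp: less_imp_le)
    ultimately show "0 \<le> g i 1 + g i (-1) \<and> g i 1 + g i (-1) \<le> exp (- (\<epsilon>^6 / 4))" by simp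
  qed
  also have "\<dots> = exp (- (\<epsilon>^6 / 4) * real n)"
    by (simp add: exp_of_nat_mult[symmetric] mult.commute)
  finally show ?thesis .
qed

lemma lin_bt: "lin_pred (bt \<eta> p p' n) n x = cc \<eta> p p' n * SS p p' n x"
proof -
  have "(\<Sum>i=1..n. bt \<eta> p p' n i * x i) = cc \<eta> p p' n * (\<Sum>i=1..n. ww p p' i * x i)"
    unfolding sum_distrib_left by (rule sum.cong) (auto simp: bt_def)
  moreover have "SS p p' n x = (\<Sum>i=1..n. ww p p' i * x i) - (\<Sum>i=1..n. ww p p' i * mm p p' i)"
    unfolding SS_def sum_subtractf[symmetric] by (simp add: right_diff_distrib)
  ultimately show ?thesis
    by (simp add: lin_pred_def bt_def right_diff_distrib)
qed

lemma ww_swap: "ww p' p i = - ww p p' i"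
proof -
  have "dd p' p i = dd p p' i" by (simp add: dd_def)
  thus ?thesis by (simp add: ww_def minus_divide_left)
qed

lemma SS_swap: "SS p' p n x = - SS p p' n x"
proof -
  have "mm p' p i = mm p p' i" for i by (simp add: mm_def)
  thus ?thesis by (simp add: SS_def ww_swap[where p=p and p'=p'] sum_negf[symmetric])
qed

lemma dd_pos: assumes "0 < p i" "p i < 1" "0 < p' i" "p' i < 1" shows "dd p p' i > 0"
proof -
  have "dd p p' i = 2 * (p i * (1 - p i)) + 2 * (p' i * (1 - p' i))"
    by (simp add: dd_def power2_eq_square field_simps)
  moreover have "p i * (1 - p i) > 0" "p' i * (1 - p' i) > 0" using assms by simp_all
  ultimately show ?thesis by simp
qed

theorem mainTheorem8:
  fixes \<epsilon> :: real
  assumes "0 < \<epsilon>" and "\<epsilon> < 1/2"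
  shows "\<exists>C1>0. \<forall>(n::nat) (\<eta>::real) (p::nat \<Rightarrow> real) (p'::nat \<Rightarrow> real) (\<beta>::nat \<Rightarrow> real).
           0 \<le> \<eta> \<and> \<eta> < 1/2
           \<and> (\<forall>i\<in>{1..n}. \<epsilon> \<le> p i \<and> p i \<le> 1 - \<epsilon> \<and> \<epsilon> \<le> p' i \<and> p' i \<le> 1 - \<epsilon>
                          \<and> \<bar>p i - p' i\<bar> \<ge> \<epsilon>)
           \<and> is_risk_minimizer \<eta> p p' n \<beta>
           \<longrightarrow> toy_error_prob \<eta> p p' n \<beta> \<le> exp (- C1 * real n)"
proof (intro exI[of _ "\<epsilon>^6 / 4"] conjI allI impI)
  show "\<epsilon>^6 / 4 > 0" using assms by simp
  fix n :: nat and \<eta> :: real and p p' \<beta> :: "nat \<Rightarrow> real"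
  assume H: "0 \<le> \<eta> \<and> \<eta> < 1/2
           \<and> (\<forall>i\<in>{1..n}. \<epsilon> \<le> p i \<and> p i \<le> 1 - \<epsilon> \<and> \<epsilon> \<le> p' i \<and> p' i \<le> 1 - \<epsilon>
                          \<and> \<bar>p i - p' i\<bar> \<ge> \<epsilon>)
           \<and> is_risk_minimizer \<eta> p p' n \<beta>"
  have eta: "0 \<le> \<eta>" "\<eta> < 1/2" using H by auto
  have hp: "\<forall>i\<in>{1..n}. \<epsilon> \<le> p i \<and> p i \<le> 1 - \<epsilon> \<and> \<epsilon> \<le> p' i \<and> p' i \<le> 1 - \<epsilon> \<and> \<epsilon> \<le> \<bar>p i - p' i\<bar>"
    using H by auto
  have hp': "\<forall>i\<in>{1..n}. \<epsilon> \<le> p' i \<and> p' i \<le> 1 - \<epsilon> \<and> \<epsilon> \<le> p i \<and> p i \<le> 1 - \<epsilon> \<and> \<epsilon> \<le> \<bar>p' i - p i\<bar>"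
    using hp by (auto simp: abs_minus_commute)
  have min: "is_risk_minimizer \<eta> p p' n \<beta>" using H by auto
  have pp: "\<forall>i\<in>{1..n}. 0 < p i \<and> p i < 1" "\<forall>i\<in>{1..n}. 0 < p' i \<and> p' i < 1"
    using hp assms by force+
  have dpos: "\<forall>j\<in>{1..n}. dd p p' j > 0" using pp dd_pos by blast
  have "KK p p' n \<ge> 0" unfolding KK_def ww_def
  proof (rule sum_nonneg)
    fix i assume "i \<in> {1..n}"
    hence "dd p p' i > 0" using dpos by blast
    thus "0 \<le> (p i - p' i) * ((p i - p' i) / dd p p' i)"
      using divide_nonneg_pos[OF zero_le_power2[of "p i - p' i"], of "dd p p' i"] by (simp add: power2_eq_square)
  qed
  hence Kpos: "1 + KK p p' n > 0" by simp
  have ccpos: "cc \<eta> p p' n > 0" using Kpos eta by (simp add: cc_def)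
  have eq: "lin_pred \<beta> n x = cc \<eta> p p' n * SS p p' n x" if "x \<in> sign_vectors n" for x
  proof -
    have d': "\<forall>j\<in>{1..n}. dd p p' j \<noteq> 0" using dpos by auto
    have "lin_pred \<beta> n x = lin_pred (bt \<eta> p p' n) n x"
      using minimizer_eq[OF eta(1) _ pp d' _ min that] eta Kpos by simp
    thus ?thesis by (simp add: lin_bt)
  qed
  have c1: "(cc \<eta> p p' n * S * 1 \<le> 0) = (S \<le> 0)" for S
    using ccpos by (simp add: mult_le_0_iff)
  have c2: "(cc \<eta> p p' n * SS p p' n x * (-1) \<le> 0) = (SS p' p n x \<le> 0)" for x
    using ccpos by (simp add: SS_swap[where p=p and p'=p'] zero_le_mult_iff)
  have "toy_error_prob \<eta> p p' n \<beta> = (\<Sum>x\<in>sign_vectors n.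
       (1/2) * (if SS p p' n x \<le> 0 then bern_mass p n x else 0)
     + (1/2) * (if SS p' p n x \<le> 0 then bern_mass p' n x else 0))"
    unfolding toy_error_prob_def
  proof (subst swap3, rule sum.cong)
    fix x assume x: "x \<in> sign_vectors n"
    show "(\<Sum>z\<in>{-1,1::real}. \<Sum>y\<in>{-1,1::real}. if lin_pred \<beta> n x * z \<le> 0 then toy_mass \<eta> p p' n x y z else 0)
      = (1/2) * (if SS p p' n x \<le> 0 then bern_mass p n x else 0)
     + (1/2) * (if SS p' p n x \<le> 0 then bern_mass p' n x else 0)"
      unfolding eq[OF x] using c1[of "SS p p' n x"] c2[of x]
      by (auto simp: toy_mass_def field_simps)
  qed simp
  also have "\<dots> = (1/2) * (\<Sum>x\<in>sign_vectors n. if SS p p' n x \<le> 0 then bern_mass p n x else 0)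
     + (1/2) * (\<Sum>x\<in>sign_vectors n. if SS p' p n x \<le> 0 then bern_mass p' n x else 0)"
    by (simp add: sum.distrib sum_distrib_left)
  also have "\<dots> \<le> (1/2) * exp (- (\<epsilon>^6 / 4) * real n) + (1/2) * exp (- (\<epsilon>^6 / 4) * real n)"
    using chernoff[OF assms hp] chernoff[OF assms hp'] by linarith
  finally show "toy_error_prob \<eta> p p' n \<beta> \<le> exp (- (\<epsilon>^6 / 4) * real n)" by simp
qed

end
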